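(* Let $m\in(0,1)$, $h_0,h_1\in\mathbb{R}$, and let $(P_t)_{t\ge0}$ be the residual polynomials of $\mathrm{HB}_2(h_0,h_1;m)$, i.e. the polynomials with $x_t-x_*=P_t(H)(x_0-x_* )$ for every quadratic $f(x)=\tfrac12(x-x_* )^\top H(x-x_* )+f_*$ and every $x_0$. Let $\zeta(\lambda)=\left(\frac{1+m-\lambda h_0}{2\sqrt m}\right)\left(\frac{1+m-\lambda h_1}{2\sqrt m}\right)$. Then for every $n\ge0$ and every $\lambda$ with $\zeta(\lambda)\ge0$ (in particular whenever $2\zeta(\lambda)-1\ge-1$), $$P_{2n}(\lambda)=m^n\left[\frac{2m}{1+m}T_{2n}\big(\sqrt{\zeta(\lambda)}\big)+\frac{1-m}{1+m}U_{2n}\big(\sqrt{\zeta(\lambda)}\big)\right].$$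
   Context: $\mathrm{HB}_2(h_0,h_1;m)$ started at $x_0$ produces $x_1=x_0-\frac{h_0}{1+m}\nabla f(x_0)$ and $x_{t+1}=x_t-h_{t\bmod 2}\nabla f(x_t)+m(x_t-x_{t-1})$ for $t\ge1$. $T_n$ and $U_n$ are the Chebyshev polynomials of the first and second kind ($T_0=U_0=1$, $T_1(x)=x$, $U_1(x)=2x$, both satisfying $Q_{n+1}=2xQ_n-Q_{n-1}$). *)

theory Defs
  imports "HOL-Analysis.Analysis" "HOL-Computational_Algebra.Polynomial"
begin

text \<open>Chebyshev polynomials of the first and second kind, as functions on the reals.\<close>
fun cheb_T :: "nat \<Rightarrow> real \<Rightarrow> real" where
  "cheb_T 0 x = 1"
| "cheb_T (Suc 0) x = x"
| "cheb_T (Suc (Suc n)) x = 2 * x * cheb_T (Suc n) x - cheb_T n x"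

fun cheb_U :: "nat \<Rightarrow> real \<Rightarrow> real" where
  "cheb_U 0 x = 1"
| "cheb_U (Suc 0) x = 2 * x"
| "cheb_U (Suc (Suc n)) x = 2 * x * cheb_U (Suc n) x - cheb_U n x"

text \<open>The iterates of HB_2(h0,h1;m) started at x0, for a gradient map g.\<close>
fun hb2 :: "real \<Rightarrow> real \<Rightarrow> real \<Rightarrow> ('a::real_vector \<Rightarrow> 'a) \<Rightarrow> 'a \<Rightarrow> nat \<Rightarrow> 'a" where
  "hb2 h0 h1 m g x0 0 = x0"
| "hb2 h0 h1 m g x0 (Suc 0) = x0 - (h0 / (1 + m)) *\<^sub>R g x0"
| "hb2 h0 h1 m g x0 (Suc (Suc t)) =
     hb2 h0 h1 m g x0 (Suc t)
     - (if even (Suc t) then h0 else h1) *\<^sub>R g (hb2 h0 h1 m g x0 (Suc t))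
     + m *\<^sub>R (hb2 h0 h1 m g x0 (Suc t) - hb2 h0 h1 m g x0 t)"

text \<open>Evaluation of a real polynomial at a square matrix.\<close>
definition poly_mat :: "real poly \<Rightarrow> real^'n^'n \<Rightarrow> real^'n^'n" where
  "poly_mat p H = (\<Sum>i\<le>degree p. coeff p i *\<^sub>R (((\<lambda>A. H ** A) ^^ i) (mat 1)))"

end

theory Submission
  imports Defs
begin

lemma ifz: "(if P then x else 0) * (y::real) = (if P then x*y else 0)" by simp
lemma matmat: "(mat a :: real^'n^'n) ** mat b = mat (a*b)"
  by (simp add: matrix_matrix_mult_def mat_def vec_eq_iff ifz sum.delta sum.delta' cong: if_cong)
lemma matvec: "(mat a :: real^'n^'n) *v x = a *\<^sub>R x"
  by (simp add: matrix_vector_mult_def mat_def vec_eq_iff ifz sum.delta sum.delta' cong: if_cong)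
lemma powmat: "((\<lambda>A. (mat a :: real^'n^'n) ** A) ^^ i) (mat 1) = mat (a^i)"
  by (induction i) (simp_all add: matmat)
lemma polymat: "poly_mat p (mat a :: real^'n^'n) = mat (poly p a)"
  unfolding poly_mat_def powmat poly_altdef
  by (auto simp add: vec_eq_iff mat_def sum_component)

fun rr :: "real \<Rightarrow> real \<Rightarrow> real \<Rightarrow> real \<Rightarrow> nat \<Rightarrow> real" where
  "rr h0 h1 m lam 0 = 1"
| "rr h0 h1 m lam (Suc 0) = 1 - (h0 / (1 + m)) * lam"
| "rr h0 h1 m lam (Suc (Suc t)) = rr h0 h1 m lam (Suc t)
     - (if even (Suc t) then h0 else h1) * lam * rr h0 h1 m lam (Suc t)
     + m * (rr h0 h1 m lam (Suc t) - rr h0 h1 m lam t)"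

lemma hb2_rr2: "hb2 h0 h1 m (\<lambda>x. (mat lam :: real^'n^'n) *v (x - 0)) x0 t = rr h0 h1 m lam t *\<^sub>R x0
  \<and> hb2 h0 h1 m (\<lambda>x. (mat lam :: real^'n^'n) *v (x - 0)) x0 (Suc t) = rr h0 h1 m lam (Suc t) *\<^sub>R x0"
  by (induction t) (simp_all add: matvec algebra_simps)
lemma hb2_rr: "hb2 h0 h1 m (\<lambda>x. (mat lam :: real^'n^'n) *v (x - 0)) x0 t = rr h0 h1 m lam t *\<^sub>R x0"
  using hb2_rr2 by blast

lemma hb2_rr3: "hb2 h0 h1 m ((*\<^sub>R) lam) (x0::'a::real_vector) t = rr h0 h1 m lam t *\<^sub>R x0
  \<and> hb2 h0 h1 m ((*\<^sub>R) lam) x0 (Suc t) = rr h0 h1 m lam (Suc t) *\<^sub>R x0"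
  by (induction t) (simp_all add: algebra_simps)

lemma rr_ev: "even t \<Longrightarrow> rr h0 h1 m lam (Suc (Suc t)) = (1+m-lam*h1) * rr h0 h1 m lam (Suc t) - m * rr h0 h1 m lam t"
  by (simp add: algebra_simps)
lemma rr_od: "odd t \<Longrightarrow> rr h0 h1 m lam (Suc (Suc t)) = (1+m-lam*h0) * rr h0 h1 m lam (Suc t) - m * rr h0 h1 m lam t"
  by (simp add: algebra_simps)

lemma rr_even: "rr h0 h1 m lam (2*k+4) =
   ((1+m-lam*h0)*(1+m-lam*h1) - 2*m) * rr h0 h1 m lam (2*k+2) - m^2 * rr h0 h1 m lam (2*k)"
proof -
  let ?r = "rr h0 h1 m lam"
  have e4: "?r (2*k+4) = (1+m-lam*h1) * ?r (2*k+3) - m * ?r (2*k+2)"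
  proof -
    have q: "Suc (Suc (2*k+2)) = 2*k+4" "Suc (2*k+3) = 2*k+4" "Suc (2*k+2) = 2*k+3" by simp_all
    have o: "even (2*k+2)" by simp
    show ?thesis using rr_ev[OF o, of h0 h1 m lam] unfolding q .
  qed
  have e3: "?r (2*k+3) = (1+m-lam*h0) * ?r (2*k+2) - m * ?r (2*k+1)"
  proof -
    have q: "Suc (Suc (2*k+1)) = 2*k+3" "Suc (2*k+2) = 2*k+3" "Suc (2*k+1) = 2*k+2" by simp_all
    have o: "odd (2*k+1)" by simp
    show ?thesis using rr_od[OF o, of h0 h1 m lam] unfolding q .
  qed
  have e2: "?r (2*k+2) = (1+m-lam*h1) * ?r (2*k+1) - m * ?r (2*k)"
  proof -
    have q: "Suc (Suc (2*k)) = 2*k+2" "Suc (2*k+1) = 2*k+2" "Suc (2*k) = 2*k+1" by simp_all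
    have o: "even (2*k)" by simp
    show ?thesis using rr_ev[OF o, of h0 h1 m lam] unfolding q .
  qed
  show ?thesis unfolding e4 e3 by (simp add: e2 algebra_simps power2_eq_square)
qed

lemma aux: "(1+m::real) \<noteq> 0 \<Longrightarrow> 4*m*w/(1+m) - m = m*(2*m/(1+m)*(2*w-1) + (1-m)/(1+m)*(4*w-1))"
proof -
  assume c: "1+m \<noteq> 0"
  have "m*(2*m/(1+m)*(2*w-1) + (1-m)/(1+m)*(4*w-1)) = m*((2*m*(2*w-1) + (1-m)*(4*w-1))/(1+m))"
    by (simp add: add_divide_distrib)
  also have "(2*m*(2*w-1) + (1-m)*(4*w-1)) = 4*w - (1+m)" by (simp add: algebra_simps)
  also have "m*((4*w - (1+m))/(1+m)) = 4*m*w/(1+m) - m" using c by (simp add: diff_divide_distrib algebra_simps)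
  finally show ?thesis by simp
qed

lemma alg: assumes a: "T2 = 2*(2*w-1)*T1 - T0" and b: "U2 = 2*(2*w-1)*U1 - (U0::real)"
  shows "(4*m*w - 2*m) * (m^(Suc j) * (A*T1 + B*U1)) - m^2*(m^j*(A*T0+B*U0)) = m^(Suc(Suc j)) * (A*T2 + B*U2)"
  unfolding a b by (simp add: algebra_simps power2_eq_square)

lemma T4: "cheb_T (n+4) x = 2*(2*x^2-1) * cheb_T (n+2) x - cheb_T n x"
proof -
  have a: "cheb_T (n+4) x = 2*x*cheb_T (n+3) x - cheb_T (n+2) x"
    by (simp add: numeral_eq_Suc)
  have b: "cheb_T (n+3) x = 2*x*cheb_T (n+2) x - cheb_T (n+1) x"
    by (simp add: numeral_eq_Suc)
  have c: "cheb_T (n+2) x = 2*x*cheb_T (n+1) x - cheb_T n x"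
    by (simp add: numeral_eq_Suc)
  show ?thesis unfolding a b by (simp add: c algebra_simps power2_eq_square)
qed

lemma U4: "cheb_U (n+4) x = 2*(2*x^2-1) * cheb_U (n+2) x - cheb_U n x"
proof -
  have a: "cheb_U (n+4) x = 2*x*cheb_U (n+3) x - cheb_U (n+2) x"
    by (simp add: numeral_eq_Suc)
  have b: "cheb_U (n+3) x = 2*x*cheb_U (n+2) x - cheb_U (n+1) x"
    by (simp add: numeral_eq_Suc)
  have c: "cheb_U (n+2) x = 2*x*cheb_U (n+1) x - cheb_U n x"
    by (simp add: numeral_eq_Suc)
  show ?thesis unfolding a b by (simp add: c algebra_simps power2_eq_square)
qed

lemma rr_formula:
  assumes m: "0 < m" and zz: "(1+m-lam*h0)*(1+m-lam*h1) = 4*m*z^2"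
  shows "rr h0 h1 m lam (2*n) = m^n * (2*m/(1+m) * cheb_T (2*n) z + (1-m)/(1+m) * cheb_U (2*n) z)"
proof (induction n rule: nat_less_induct)
  case (1 n)
  let ?F = "\<lambda>n. m^n * (2*m/(1+m) * cheb_T (2*n) z + (1-m)/(1+m) * cheb_U (2*n) z)"
  have m1: "1 + m \<noteq> 0" using m by simp
  show ?case
  proof (cases n)
    case 0
    have "2*m/(1+m) + (1-m)/(1+m) = 1" using m1 by (simp add: add_divide_distrib[symmetric])
    then show ?thesis using 0 by simp
  next
    case (Suc k) note nk = this
    show ?thesis
    proof (cases k)
      case 0
      have "rr h0 h1 m lam 2 = (1+m-lam*h1) * rr h0 h1 m lam 1 - m * rr h0 h1 m lam 0"
        using rr_ev[of 0 h0 h1 m lam] by (simp add: numeral_eq_Suc del: rr.simps)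
      also have "\<dots> = (1+m-lam*h1) * ((1+m-lam*h0)/(1+m)) - m"
        using m1 by (simp add: field_simps)
      also have "\<dots> = (1+m-lam*h0)*(1+m-lam*h1)/(1+m) - m" by simp
      also have "\<dots> = 4*m*z^2/(1+m) - m" unfolding zz ..
      also have "\<dots> = m * (2*m/(1+m) * (2*z^2-1) + (1-m)/(1+m) * (4*z^2-1))"
        using aux[OF m1, of "z^2"] by simp
      also have "\<dots> = ?F 1"
        by (simp add: numeral_eq_Suc power2_eq_square algebra_simps)
      finally show ?thesis using nk 0 by simp
    next
      case (Suc j)
      have IH1: "rr h0 h1 m lam (2*j+2) = ?F (Suc j)" using 1[rule_format, of "Suc j"] nk Suc by simp
      have IH0: "rr h0 h1 m lam (2*j) = ?F j" using 1[rule_format, of j] nk Suc by simp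
      have n2: "2*n = 2*j+4" using nk Suc by simp
      have "rr h0 h1 m lam (2*n) = (4*m*z^2 - 2*m) * ?F (Suc j) - m^2 * ?F j"
        unfolding n2 rr_even IH1 IH0 zz ..
      also have "\<dots> = ?F n"
      proof -
        have e: "2 * Suc j = 2*j+2" "2 * Suc (Suc j) = 2*j+4" by simp_all
        have nn: "n = Suc (Suc j)" using nk Suc by simp
        show ?thesis unfolding nn e
          using alg[OF T4[of "2*j" z] U4[of "2*j" z], of m j "2*m/(1+m)" "(1-m)/(1+m)"] .
      qed
      finally show ?thesis .
    qed
  qed
qed

theorem mainTheorem14:
  fixes m h0 h1 :: real
    and P :: "nat \<Rightarrow> real poly"
    and lam :: real and n :: nat
  assumes m: "0 < m" "m < 1"
    and residual: "\<And>(H::real^'d^'d) (xs::real^'d) x0 t.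
        transpose H = H \<Longrightarrow>
        hb2 h0 h1 m (\<lambda>x. H *v (x - xs)) x0 t - xs = poly_mat (P t) H *v (x0 - xs)"
    and zeta: "((1 + m - lam * h0) / (2 * sqrt m)) * ((1 + m - lam * h1) / (2 * sqrt m)) \<ge> 0"
  shows "poly (P (2 * n)) lam =
    m ^ n * (2 * m / (1 + m) * cheb_T (2 * n)
               (sqrt (((1 + m - lam * h0) / (2 * sqrt m)) * ((1 + m - lam * h1) / (2 * sqrt m))))
           + (1 - m) / (1 + m) * cheb_U (2 * n)
               (sqrt (((1 + m - lam * h0) / (2 * sqrt m)) * ((1 + m - lam * h1) / (2 * sqrt m)))))"
proof -
  let ?z = "sqrt (((1 + m - lam * h0) / (2 * sqrt m)) * ((1 + m - lam * h1) / (2 * sqrt m)))"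
  have zz: "(1+m-lam*h0)*(1+m-lam*h1) = 4*m*?z^2"
  proof -
    have sq: "sqrt m * sqrt m = m" using m by simp
    have "?z^2 = ((1 + m - lam * h0) / (2 * sqrt m)) * ((1 + m - lam * h1) / (2 * sqrt m))"
      using zeta by simp
    also have "\<dots> = (1+m-lam*h0)*(1+m-lam*h1) / (4*m)" using sq by (simp add: field_simps)
    finally show ?thesis using m by (simp add: field_simps)
  qed
  let ?x0 = "(\<chi> i. 1) :: real^'d"
  have ne: "?x0 \<noteq> 0" by (simp add: vec_eq_iff)
  have "hb2 h0 h1 m (\<lambda>x. (mat lam :: real^'d^'d) *v (x - 0)) ?x0 (2*n) - 0
        = poly_mat (P (2*n)) (mat lam) *v (?x0 - 0)"
    by (rule residual) simp
  hence "rr h0 h1 m lam (2*n) *\<^sub>R ?x0 = poly (P (2*n)) lam *\<^sub>R ?x0"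
    by (simp add: hb2_rr3 polymat matvec)
  hence "rr h0 h1 m lam (2*n) = poly (P (2*n)) lam"
    using ne by (metis scaleR_cancel_right)
  with rr_formula[OF m(1) zz, of n] show ?thesis by simp
qed

end
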